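(* Converting IFAs to nondeterministic finite automata requires a super-polynomial state blowup: there is no polynomial $p$ such that every IFA with $n$ states admits a nondeterministic finite automaton with at most $p(n)$ states accepting the same language.
   Context: A $\mathbb{Q}$-weighted automaton $\mathcal{A} = (Q, \Sigma, M, \alpha, \eta)$ consists of a finite state set $Q$, finite alphabet $\Sigma$, $M : \Sigma \to \mathbb{Q}^{Q\times Q}$, initial row vector $\alpha \in \mathbb{Q}^Q$, final column vector $\eta \in \mathbb{Q}^Q$; with $M(a_1\cdots a_k) = M(a_1)\cdots M(a_k)$, it assigns $L_\mathcal{A}(w) = \alpha M(w)\eta$ to each $w \in \Sigma^*$. It is an IFA if $L_\mathcal{A}(w) \in \{0,1\}$ for all $w$, and then its language is $L(\mathcal{A}) = \{w \mid L_\mathcal{A}(w) = 1\}$. The number of states of $\mathcal{A}$ is $|Q|$. *)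

theory Defs
  imports "Jordan_Normal_Form.Matrix" "HOL-Computational_Algebra.Polynomial"
begin

definition wa_wf :: "nat \<Rightarrow> nat set \<Rightarrow> (nat \<Rightarrow> rat mat) \<Rightarrow> rat vec \<Rightarrow> rat vec \<Rightarrow> bool" where
  "wa_wf n Sig M alpha eta \<longleftrightarrow> finite Sig \<and> dim_vec alpha = n \<and> dim_vec eta = n
     \<and> (\<forall>a\<in>Sig. M a \<in> carrier_mat n n)"

definition wa_mat :: "nat \<Rightarrow> (nat \<Rightarrow> rat mat) \<Rightarrow> nat list \<Rightarrow> rat mat" where
  "wa_mat n M w = foldr (\<lambda>a B. M a * B) w (1\<^sub>m n)"

definition wa_weight :: "nat \<Rightarrow> (nat \<Rightarrow> rat mat) \<Rightarrow> rat vec \<Rightarrow> rat vec \<Rightarrow> nat list \<Rightarrow> rat" where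
  "wa_weight n M alpha eta w = alpha \<bullet> (wa_mat n M w *\<^sub>v eta)"

definition is_IFA :: "nat \<Rightarrow> nat set \<Rightarrow> (nat \<Rightarrow> rat mat) \<Rightarrow> rat vec \<Rightarrow> rat vec \<Rightarrow> bool" where
  "is_IFA n Sig M alpha eta \<longleftrightarrow> wa_wf n Sig M alpha eta
     \<and> (\<forall>w\<in>lists Sig. wa_weight n M alpha eta w \<in> {0, 1})"

definition ifa_lang :: "nat \<Rightarrow> nat set \<Rightarrow> (nat \<Rightarrow> rat mat) \<Rightarrow> rat vec \<Rightarrow> rat vec \<Rightarrow> nat list set" where
  "ifa_lang n Sig M alpha eta = {w \<in> lists Sig. wa_weight n M alpha eta w = 1}"

definition is_NFA :: "'q set \<Rightarrow> nat set \<Rightarrow> ('q \<Rightarrow> nat \<Rightarrow> 'q set) \<Rightarrow> 'q set \<Rightarrow> 'q set \<Rightarrow> bool" where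
  "is_NFA Q Sig delta I F \<longleftrightarrow> finite Q \<and> finite Sig \<and> I \<subseteq> Q \<and> F \<subseteq> Q
     \<and> (\<forall>q\<in>Q. \<forall>a\<in>Sig. delta q a \<subseteq> Q)"

fun nfa_reach :: "('q \<Rightarrow> nat \<Rightarrow> 'q set) \<Rightarrow> 'q set \<Rightarrow> nat list \<Rightarrow> 'q set" where
  "nfa_reach delta S [] = S"
| "nfa_reach delta S (a # w) = nfa_reach delta (\<Union>q\<in>S. delta q a) w"

definition nfa_lang :: "nat set \<Rightarrow> ('q \<Rightarrow> nat \<Rightarrow> 'q set) \<Rightarrow> 'q set \<Rightarrow> 'q set \<Rightarrow> nat list set" where
  "nfa_lang Sig delta I F = {w \<in> lists Sig. nfa_reach delta I w \<inter> F \<noteq> {}}"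

end

theory Submission
  imports Defs
begin

definition shiftc :: "(nat \<Rightarrow> rat) set \<Rightarrow> bool" where
  "shiftc H \<longleftrightarrow> (\<forall>h\<in>H. (\<lambda>m. h (Suc m)) \<in> H)"

definition rep :: "(nat \<Rightarrow> rat) \<Rightarrow> nat \<Rightarrow> bool" where
  "rep f n \<longleftrightarrow> (\<exists>H \<alpha>. finite H \<and> card H \<le> n \<and> shiftc H \<and> (\<forall>m. f m = (\<Sum>h\<in>H. \<alpha> h * h m)))"

lemma wa_mat_rep: "wa_mat n M (replicate (Suc L) a) = M a * wa_mat n M (replicate L a)"
  by (simp add: wa_mat_def)

lemma wa_mat_carrier: "M a \<in> carrier_mat n n \<Longrightarrow> wa_mat n M (replicate L a) \<in> carrier_mat n n"
  by (induction L) (auto simp: wa_mat_def)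

lemma rep_WA:
  assumes "rep f n"
  shows "\<exists>n'\<le>n. \<exists>M al et. wa_wf n' {0} M al et \<and> (\<forall>L. wa_weight n' M al et (replicate L 0) = f L)"
proof -
  obtain H \<alpha> where H: "finite H" "card H \<le> n" "shiftc H" "\<And>m. f m = (\<Sum>h\<in>H. \<alpha> h * h m)"
    using assms unfolding rep_def by blast
  define n' where "n' = card H"
  obtain e where e: "bij_betw e {0..<n'} H" using ex_bij_betw_nat_finite[OF H(1)] n'_def by blast
  define A where "A = mat n' n' (\<lambda>(j,l). if e l = (\<lambda>m. e j (Suc m)) then 1 else (0::rat))"
  define M where "M = (\<lambda>a::nat. A)"
  define et where "et = vec n' (\<lambda>l. e l 0)"
  define al where "al = vec n' (\<lambda>j. \<alpha> (e j))"
  have A: "A \<in> carrier_mat n' n'" unfolding A_def by simp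
  have key: "wa_mat n' M (replicate L 0) *\<^sub>v et = vec n' (\<lambda>j. e j L)" for L
  proof (induction L)
    case 0
    show ?case by (auto simp: wa_mat_def et_def)
  next
    case (Suc L)
    have C: "wa_mat n' M (replicate L 0) \<in> carrier_mat n' n'"
      by (rule wa_mat_carrier) (simp add: M_def A)
    have "wa_mat n' M (replicate (Suc L) 0) *\<^sub>v et = A *\<^sub>v (wa_mat n' M (replicate L 0) *\<^sub>v et)"
      unfolding wa_mat_rep using A C by (simp add: M_def et_def)
    also have "\<dots> = A *\<^sub>v vec n' (\<lambda>j. e j L)" using Suc by simp
    also have "\<dots> = vec n' (\<lambda>j. e j (Suc L))"
    proof (rule eq_vecI)
      fix j assume j: "j < dim_vec (vec n' (\<lambda>j. e j (Suc L)))"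
      hence j': "j < n'" by simp
      have "e j \<in> H" using e j' by (auto simp: bij_betw_def)
      hence "(\<lambda>m. e j (Suc m)) \<in> H" using H(3) by (auto simp: shiftc_def)
      then obtain l0 where l0: "l0 < n'" "e l0 = (\<lambda>m. e j (Suc m))" using e
        by (auto simp: bij_betw_def)
      have iff: "l < n' \<Longrightarrow> (e l = (\<lambda>m. e j (Suc m))) = (l = l0)" for l
        using e l0 by (auto simp: bij_betw_def inj_on_def)
      have "(A *\<^sub>v vec n' (\<lambda>j. e j L)) $ j = (\<Sum>l\<in>{0..<n'}. A $$ (j,l) * e l L)"
        using j' A by (simp add: scalar_prod_def row_def)
      also have "\<dots> = (\<Sum>l\<in>{0..<n'}. if l = l0 then e l L else 0)"
        by (rule sum.cong) (auto simp: A_def j' iff)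
      also have "\<dots> = e l0 L" using l0 by simp
      also have "\<dots> = e j (Suc L)" using l0 by simp
      finally show "(A *\<^sub>v vec n' (\<lambda>j. e j L)) $ j = vec n' (\<lambda>j. e j (Suc L)) $ j" using j' by simp
    qed (use A in simp)
    finally show ?case .
  qed
  have w: "wa_weight n' M al et (replicate L 0) = f L" for L
  proof -
    have "wa_weight n' M al et (replicate L 0) = (\<Sum>j\<in>{0..<n'}. \<alpha> (e j) * e j L)"
      unfolding wa_weight_def key by (simp add: scalar_prod_def al_def)
    also have "\<dots> = (\<Sum>h\<in>H. \<alpha> h * h L)"
      using sum.reindex_bij_betw[OF e, of "\<lambda>h. \<alpha> h * h L"] by simp
    finally show ?thesis using H(4) by simp
  qed
  have "wa_wf n' {0} M al et" unfolding wa_wf_def using A by (simp add: M_def al_def et_def)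
  thus ?thesis using w H(2) n'_def by blast
qed

lemma rep_mono: "rep f a \<Longrightarrow> a \<le> b \<Longrightarrow> rep f b"
  unfolding rep_def by (meson order_trans)

lemma rep_const: "rep (\<lambda>m. c) 1"
  unfolding rep_def
  by (rule exI[of _ "{\<lambda>m. 1}"], rule exI[of _ "\<lambda>_. c"]) (simp add: shiftc_def)

lemma rep_scale: "rep f a \<Longrightarrow> rep (\<lambda>m. c * f m) a"
  unfolding rep_def
proof (elim exE conjE)
  fix H \<alpha> assume *: "finite H" "card H \<le> a" "shiftc H" "\<forall>m. f m = (\<Sum>h\<in>H. \<alpha> h * h m)"
  show "\<exists>H \<alpha>. finite H \<and> card H \<le> a \<and> shiftc H \<and> (\<forall>m. c * f m = (\<Sum>h\<in>H. \<alpha> h * h m))"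
    by (rule exI[of _ H], rule exI[of _ "\<lambda>h. c * \<alpha> h"]) (use * in \<open>simp add: sum_distrib_left mult.assoc\<close>)
qed

lemma rep_add: "rep f a \<Longrightarrow> rep g b \<Longrightarrow> rep (\<lambda>m. f m + g m) (a + b)"
  unfolding rep_def
proof (elim exE conjE)
  fix H \<alpha> H2 \<beta> assume *: "finite H" "card H \<le> a" "shiftc H" "\<forall>m. f m = (\<Sum>h\<in>H. \<alpha> h * h m)"
    and **: "finite H2" "card H2 \<le> b" "shiftc H2" "\<forall>m. g m = (\<Sum>h\<in>H2. \<beta> h * h m)"
  define \<gamma> where "\<gamma> h = (if h \<in> H then \<alpha> h else 0) + (if h \<in> H2 then \<beta> h else 0)" for h
  have "card (H \<union> H2) \<le> a + b" using card_Un_le[of H H2] * ** by linarith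
  moreover have "shiftc (H \<union> H2)" using *(3) **(3) by (auto simp: shiftc_def)
  moreover have "f m + g m = (\<Sum>h\<in>H \<union> H2. \<gamma> h * h m)" for m
  proof -
    have "(\<Sum>h\<in>H \<union> H2. \<gamma> h * h m) = (\<Sum>h\<in>H \<union> H2. (if h \<in> H then \<alpha> h * h m else 0))
       + (\<Sum>h\<in>H \<union> H2. (if h \<in> H2 then \<beta> h * h m else 0))"
      unfolding sum.distrib[symmetric] by (rule sum.cong) (auto simp: \<gamma>_def distrib_right)
    also have "(\<Sum>h\<in>H \<union> H2. (if h \<in> H then \<alpha> h * h m else 0)) = (\<Sum>h\<in>H. \<alpha> h * h m)"
      using * ** by (simp add: sum.If_cases Int_absorb1)
    also have "(\<Sum>h\<in>H \<union> H2. (if h \<in> H2 then \<beta> h * h m else 0)) = (\<Sum>h\<in>H2. \<beta> h * h m)"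
      using * ** by (simp add: sum.If_cases Int_absorb1)
    finally show ?thesis using *(4) **(4) by simp
  qed
  ultimately show "\<exists>H \<alpha>. finite H \<and> card H \<le> a + b \<and> shiftc H \<and> (\<forall>m. f m + g m = (\<Sum>h\<in>H. \<alpha> h * h m))"
    using *(1) **(1) by blast
qed

lemma rep_mult: "rep f a \<Longrightarrow> rep g b \<Longrightarrow> rep (\<lambda>m. f m * g m) (a * b)"
  unfolding rep_def
proof (elim exE conjE)
  fix H \<alpha> H2 \<beta> assume *: "finite H" "card H \<le> a" "shiftc H" "\<forall>m. f m = (\<Sum>h\<in>H. \<alpha> h * h m)"
    and **: "finite H2" "card H2 \<le> b" "shiftc H2" "\<forall>m. g m = (\<Sum>h\<in>H2. \<beta> h * h m)"
  define P where "P = (\<lambda>(u::nat\<Rightarrow>rat, v::nat\<Rightarrow>rat). (\<lambda>m. u m * v m))"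
  define S where "S = P ` (H \<times> H2)"
  define \<gamma> where "\<gamma> h = (\<Sum>x\<in>{x \<in> H \<times> H2. P x = h}. \<alpha> (fst x) * \<beta> (snd x))" for h
  have fin: "finite (H \<times> H2)" using * ** by simp
  have "card S \<le> card (H \<times> H2)" unfolding S_def by (rule card_image_le[OF fin])
  also have "\<dots> \<le> a * b" using * ** by (simp add: card_cartesian_product mult_le_mono)
  finally have c: "card S \<le> a * b" .
  have sh: "shiftc S" unfolding shiftc_def S_def
  proof
    fix h assume "h \<in> P ` (H \<times> H2)"
    then obtain u v where uv: "u \<in> H" "v \<in> H2" "h = P (u,v)" by auto
    have "(\<lambda>m. u (Suc m)) \<in> H" "(\<lambda>m. v (Suc m)) \<in> H2" using uv *(3) **(3) by (auto simp: shiftc_def)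
    moreover have "(\<lambda>m. h (Suc m)) = P ((\<lambda>m. u (Suc m)), (\<lambda>m. v (Suc m)))" using uv by (simp add: P_def)
    ultimately show "(\<lambda>m. h (Suc m)) \<in> P ` (H \<times> H2)" by blast
  qed
  have "f m * g m = (\<Sum>h\<in>S. \<gamma> h * h m)" for m
  proof -
    have "(\<Sum>h\<in>S. \<gamma> h * h m) = (\<Sum>h\<in>S. (\<Sum>x\<in>{x \<in> H \<times> H2. P x = h}. \<alpha> (fst x) * \<beta> (snd x) * P x m))"
      unfolding \<gamma>_def sum_distrib_right by (rule sum.cong) auto
    also have "\<dots> = (\<Sum>x\<in>H \<times> H2. \<alpha> (fst x) * \<beta> (snd x) * P x m)"
      unfolding S_def by (rule sum.image_gen[symmetric, OF fin])
    also have "\<dots> = (\<Sum>u\<in>H. \<Sum>v\<in>H2. (\<alpha> u * u m) * (\<beta> v * v m))"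
      unfolding sum.cartesian_product by (rule sum.cong) (auto simp: P_def ac_simps)
    also have "\<dots> = f m * g m" using *(4) **(4) by (simp add: sum_product)
    finally show ?thesis by simp
  qed
  thus "\<exists>H \<alpha>. finite H \<and> card H \<le> a * b \<and> shiftc H \<and> (\<forall>m. f m * g m = (\<Sum>h\<in>H. \<alpha> h * h m))"
    apply (intro exI[of _ S] exI[of _ \<gamma>])
    using c sh fin S_def by auto
qed

lemma rep_dvd: assumes "d > 0" shows "rep (\<lambda>m. if d dvd m then 1 else 0) d"
  unfolding rep_def
proof -
  define hh where "hh r = (\<lambda>m. if d dvd m + r then 1 else (0::rat))" for r
  define H where "H = hh ` {..<d}"
  have fin: "finite H" unfolding H_def by simp
  have c: "card H \<le> d" unfolding H_def using card_image_le[of "{..<d}" hh] by simp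
  have sh: "shiftc H" unfolding shiftc_def H_def
  proof
    fix h assume "h \<in> hh ` {..<d}"
    then obtain r where r: "r < d" "h = hh r" by auto
    have "(\<lambda>m. h (Suc m)) = hh (Suc r mod d)"
    proof
      fix m
      have "d dvd Suc m + r \<longleftrightarrow> d dvd m + Suc r mod d"
      proof -
        have "(m + Suc r mod d) mod d = (m + Suc r) mod d" by (rule mod_add_right_eq)
        thus ?thesis by (simp add: dvd_eq_mod_eq_0)
      qed
      thus "h (Suc m) = hh (Suc r mod d) m" using r by (simp add: hh_def)
    qed
    thus "(\<lambda>m. h (Suc m)) \<in> hh ` {..<d}" using assms by auto
  qed
  have h0: "hh 0 \<in> H" unfolding H_def using assms by auto
  have "(if d dvd m then 1 else 0) = (\<Sum>h\<in>H. (if h = hh 0 then 1 else 0) * h m)" for m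
  proof -
    have "(\<Sum>h\<in>H. (if h = hh 0 then 1 else 0) * h m) = (\<Sum>h\<in>H. (if h = hh 0 then h m else 0))"
      by (rule sum.cong) auto
    also have "\<dots> = hh 0 m" using h0 fin by (simp add: sum.delta')
    finally show ?thesis by (simp add: hh_def)
  qed
  thus "\<exists>H \<alpha>. finite H \<and> card H \<le> d \<and> shiftc H \<and> (\<forall>m. (if d dvd m then 1 else 0) = (\<Sum>h\<in>H. \<alpha> h * h m))"
    apply (intro exI[of _ H] exI[of _ "\<lambda>h. if h = hh 0 then 1 else 0"])
    using fin c sh by blast
qed

definition E :: "rat \<Rightarrow> rat \<Rightarrow> rat \<Rightarrow> rat" where
  "E x y z = 1 - x - y - z + x*y + x*z + y*z"

fun G :: "nat \<Rightarrow> nat \<Rightarrow> (nat \<Rightarrow> rat) \<Rightarrow> rat" where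
  "G 0 s v = v s"
| "G (Suc t) s v = E (G t (3*s) v) (G t (3*s+1) v) (G t (3*s+2) v)"

fun B :: "nat \<Rightarrow> nat \<Rightarrow> nat" where
  "B 0 D = D"
| "B (Suc t) D = 7 * (B t D)^2"

lemma B_pos: "1 \<le> D \<Longrightarrow> 1 \<le> B t D"
  by (induction t) (auto simp: power2_eq_square)

lemma B_bound: "7 * B t D \<le> (7*D)^(2^t)"
proof (induction t)
  case 0 then show ?case by simp
next
  case (Suc t)
  have "7 * B (Suc t) D = (7 * B t D)^2" by (simp add: power2_eq_square)
  also have "\<dots> \<le> ((7*D)^(2^t))^2" using Suc by (rule power_mono) simp
  also have "\<dots> = (7*D)^(2^t*2)" by (rule power_mult[symmetric])
  also have "\<dots> = (7*D)^(2^Suc t)" by (simp add: mult.commute)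
  finally show ?case .
qed

lemma rep_E:
  assumes "rep f1 D" "rep f2 D" "rep f3 D" "1 \<le> D"
  shows "rep (\<lambda>m. E (f1 m) (f2 m) (f3 m)) (7*D^2)"
proof -
  have n1: "rep (\<lambda>m. (-1) * f1 m) D" using assms(1) by (rule rep_scale)
  have n2: "rep (\<lambda>m. (-1) * f2 m) D" using assms(2) by (rule rep_scale)
  have n3: "rep (\<lambda>m. (-1) * f3 m) D" using assms(3) by (rule rep_scale)
  have p12: "rep (\<lambda>m. f1 m * f2 m) (D*D)" using rep_mult[OF assms(1) assms(2)] .
  have p13: "rep (\<lambda>m. f1 m * f3 m) (D*D)" using rep_mult[OF assms(1) assms(3)] .
  have p23: "rep (\<lambda>m. f2 m * f3 m) (D*D)" using rep_mult[OF assms(2) assms(3)] .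
  have s1: "rep (\<lambda>m. 1 + (-1) * f1 m) (1 + D)" using rep_add[OF rep_const n1] .
  have s2: "rep (\<lambda>m. (1 + (-1) * f1 m) + (-1) * f2 m) ((1 + D) + D)" using rep_add[OF s1 n2] .
  have s3: "rep (\<lambda>m. ((1 + (-1) * f1 m) + (-1) * f2 m) + (-1) * f3 m) (((1 + D) + D) + D)"
    using rep_add[OF s2 n3] .
  have s4: "rep (\<lambda>m. (((1 + (-1) * f1 m) + (-1) * f2 m) + (-1) * f3 m) + f1 m * f2 m) ((((1 + D) + D) + D) + D*D)"
    using rep_add[OF s3 p12] .
  have s5: "rep (\<lambda>m. ((((1 + (-1) * f1 m) + (-1) * f2 m) + (-1) * f3 m) + f1 m * f2 m) + f1 m * f3 m) (((((1 + D) + D) + D) + D*D) + D*D)"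
    using rep_add[OF s4 p13] .
  have s6: "rep (\<lambda>m. (((((1 + (-1) * f1 m) + (-1) * f2 m) + (-1) * f3 m) + f1 m * f2 m) + f1 m * f3 m) + f2 m * f3 m) ((((((1 + D) + D) + D) + D*D) + D*D) + D*D)"
    using rep_add[OF s5 p23] .
  have eq: "(\<lambda>m. (((((1 + (-1) * f1 m) + (-1) * f2 m) + (-1) * f3 m) + f1 m * f2 m) + f1 m * f3 m) + f2 m * f3 m)
     = (\<lambda>m. E (f1 m) (f2 m) (f3 m))" by (simp add: E_def)
  have "D \<le> D*D" using assms(4) by simp
  hence le: "((((((1 + D) + D) + D) + D*D) + D*D) + D*D) \<le> 7*D^2" using assms(4)
    by (simp add: power2_eq_square) (use \<open>D \<le> D*D\<close> in linarith)
  show ?thesis using rep_mono[OF s6[unfolded eq] le] .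
qed

lemma rep_G:
  assumes "\<And>i. rep (\<lambda>m. v m i) D" "1 \<le> D"
  shows "rep (\<lambda>m. G t s (v m)) (B t D)"
  using assms(1)
proof (induction t arbitrary: s)
  case 0 then show ?case by simp
next
  case (Suc t)
  have "1 \<le> B t D" using B_pos assms(2) .
  thus ?case using rep_E[OF Suc.IH Suc.IH Suc.IH] Suc.prems by simp
qed

lemma E01: "x \<in> {0,1} \<Longrightarrow> y \<in> {0,1} \<Longrightarrow> z \<in> {0,1} \<Longrightarrow> E x y z \<in> {0,1}"
  by (auto simp: E_def)

lemma G01: assumes "\<And>i. v i \<in> {0,1}" shows "G t s v \<in> {0,1}"
proof (induction t arbitrary: s)
  case 0 then show ?case using assms by simp
next
  case (Suc t) then show ?case unfolding G.simps by (intro E01)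
qed

lemma G_one: "(\<And>i. s*3^t \<le> i \<Longrightarrow> i < (s+1)*3^t \<Longrightarrow> v i = 1) \<Longrightarrow> G t s v = 1"
proof (induction t arbitrary: s)
  case 0 then show ?case by simp
next
  case (Suc t)
  have "G t (3*s+c) v = 1" if "c < 3" for c
  proof (rule Suc.IH)
    fix i assume "(3*s+c)*3^t \<le> i" "i < (3*s+c+1)*3^t"
    moreover have "s*3^Suc t \<le> (3*s+c)*3^t" "(3*s+c+1)*3^t \<le> (s+1)*3^Suc t"
      using that by (auto simp: algebra_simps)
    ultimately have "s*3^Suc t \<le> i" "i < (s+1)*3^Suc t" by linarith+
    thus "v i = 1" by (rule Suc.prems)
  qed
  from this[of 0] this[of 1] this[of 2] show ?case by (simp add: E_def)
qed

lemma G_zero: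
  assumes "s*3^t \<le> i0" "i0 < (s+1)*3^t" "v i0 = 0"
    "\<And>i. s*3^t \<le> i \<Longrightarrow> i < (s+1)*3^t \<Longrightarrow> i \<noteq> i0 \<Longrightarrow> v i = 1"
  shows "G t s v = 0"
  using assms
proof (induction t arbitrary: s)
  case 0
  then have "i0 = s" by simp
  then show ?case using 0 by simp
next
  case (Suc t)
  define j where "j = i0 div 3^t"
  have pos: "(0::nat) < 3^t" by simp
  have j1: "j*3^t \<le> i0" unfolding j_def by simp
  have j2: "i0 < (j+1)*3^t" unfolding j_def using dividend_less_times_div[OF pos, of i0]
    by (simp add: algebra_simps)
  have "3*s \<le> j" using Suc.prems(1) unfolding j_def less_eq_div_iff_mult_less_eq[OF pos]
    by (simp add: ac_simps)
  moreover have "j < 3*s+3" unfolding j_def div_less_iff_less_mult[OF pos]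
    using Suc.prems(2) by (simp add: algebra_simps)
  ultimately obtain c where c: "c < 3" "j = 3*s+c" by (metis add_less_cancel_left le_Suc_ex)
  have rng: "s*3^Suc t \<le> (3*s+c')*3^t" "(3*s+c'+1)*3^t \<le> (s+1)*3^Suc t" if "c' < 3" for c'
    using that by (auto simp: algebra_simps)
  have one: "G t (3*s+c') v = 1" if "c' < 3" "c' \<noteq> c" for c'
  proof (rule G_one)
    fix i assume i: "(3*s+c')*3^t \<le> i" "i < (3*s+c'+1)*3^t"
    have "i \<noteq> i0"
    proof
      assume "i = i0"
      hence "(3*s+c')*3^t \<le> i0" "i0 < (3*s+c'+1)*3^t" using i by auto
      hence "i0 div 3^t = 3*s+c'" by (intro div_nat_eqI) (simp_all add: algebra_simps)
      hence "3*s+c' = j" unfolding j_def by simp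
      thus False using c that by simp
    qed
    moreover have "s*3^Suc t \<le> i" "i < (s+1)*3^Suc t" using i rng[OF that(1)] by linarith+
    ultimately show "v i = 1" using Suc.prems(4) by blast
  qed
  have zero: "G t (3*s+c) v = 0"
  proof (rule Suc.IH)
    show "(3*s+c)*3^t \<le> i0" "i0 < (3*s+c+1)*3^t" using j1 j2 c by simp_all
    show "v i0 = 0" by (rule Suc.prems(3))
    fix i assume i: "(3*s+c)*3^t \<le> i" "i < (3*s+c+1)*3^t" "i \<noteq> i0"
    have "s*3^Suc t \<le> i" "i < (s+1)*3^Suc t" using i rng[OF c(1)] by linarith+
    thus "v i = 1" using Suc.prems(4) i(3) by blast
  qed
  from c(1) consider "c = 0" | "c = 1" | "c = 2" by linarith
  thus ?case
  proof cases
    case 1 thus ?thesis using zero one[of 1] one[of 2] by (simp add: E_def)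
  next
    case 2 thus ?thesis using zero one[of 0] one[of 2] by (simp add: E_def)
  next
    case 3 thus ?thesis using zero one[of 0] one[of 1] by (simp add: E_def)
  qed
qed

definition DD :: "(nat \<Rightarrow> nat \<Rightarrow> nat set) \<Rightarrow> nat set \<Rightarrow> nat set" where
  "DD \<delta> X = (\<Union>q\<in>X. \<delta> q 0)"

lemma DD_iff: "y \<in> DD \<delta> X \<longleftrightarrow> (\<exists>q\<in>X. y \<in> \<delta> q 0)"
  by (simp add: DD_def)

lemma DD_mono1: "X \<subseteq> Y \<Longrightarrow> DD \<delta> X \<subseteq> DD \<delta> Y"
  unfolding DD_def by blast

lemma DD_pow_Suc: "(DD \<delta> ^^ Suc L) X = DD \<delta> ((DD \<delta> ^^ L) X)"
  by simp

lemma reach_rep: "nfa_reach \<delta> S (replicate L 0) = (DD \<delta> ^^ L) S"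
proof (induction L arbitrary: S)
  case 0 then show ?case by simp
next
  case (Suc L)
  have "nfa_reach \<delta> S (replicate (Suc L) 0) = nfa_reach \<delta> (DD \<delta> S) (replicate L 0)"
    by (simp add: DD_def)
  also have "\<dots> = (DD \<delta> ^^ L) (DD \<delta> S)" by (rule Suc.IH)
  also have "\<dots> = (DD \<delta> ^^ Suc L) S" by (simp only: funpow_Suc_right comp_def)
  finally show ?case .
qed

lemma DD_mono: "X \<subseteq> Y \<Longrightarrow> (DD \<delta> ^^ L) X \<subseteq> (DD \<delta> ^^ L) Y"
proof (induction L)
  case 0 then show ?case by simp
next
  case (Suc L)
  hence "(DD \<delta> ^^ L) X \<subseteq> (DD \<delta> ^^ L) Y" by blast
  then show ?case unfolding DD_pow_Suc by (rule DD_mono1)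
qed

lemma DD_trans: "x \<in> (DD \<delta> ^^ a) X \<Longrightarrow> z \<in> (DD \<delta> ^^ b) {x} \<Longrightarrow> z \<in> (DD \<delta> ^^ (b + a)) X"
proof -
  assume x: "x \<in> (DD \<delta> ^^ a) X" and z: "z \<in> (DD \<delta> ^^ b) {x}"
  have "(DD \<delta> ^^ b) {x} \<subseteq> (DD \<delta> ^^ b) ((DD \<delta> ^^ a) X)" using x by (intro DD_mono) simp
  also have "\<dots> = (DD \<delta> ^^ (b + a)) X" by (simp add: funpow_add)
  finally show ?thesis using z by blast
qed

lemma DD_path: "y \<in> (DD \<delta> ^^ L) X \<Longrightarrow> \<exists>s. s 0 \<in> X \<and> (\<forall>l<L. s (Suc l) \<in> \<delta> (s l) 0) \<and> s L = y"
proof (induction L arbitrary: y)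
  case 0 then show ?case by (intro exI[of _ "\<lambda>_. y"]) simp
next
  case (Suc L)
  from Suc.prems obtain z where z: "z \<in> (DD \<delta> ^^ L) X" "y \<in> \<delta> z 0"
    unfolding DD_pow_Suc DD_iff by blast
  obtain s where s: "s 0 \<in> X" "\<forall>l<L. s (Suc l) \<in> \<delta> (s l) 0" "s L = z" using Suc.IH[OF z(1)] by blast
  show ?case
    apply (intro exI[of _ "s(Suc L := y)"])
    using s z by (auto simp: less_Suc_eq)
qed

lemma DD_seg: assumes "\<forall>l<L. s (Suc l) \<in> \<delta> (s l) 0" shows "a + b \<le> L \<Longrightarrow> s (a + b) \<in> (DD \<delta> ^^ b) {s a}"
proof (induction b)
  case 0 then show ?case by simp
next
  case (Suc b)
  hence "s (a + b) \<in> (DD \<delta> ^^ b) {s a}" by simp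
  moreover have "s (Suc (a + b)) \<in> \<delta> (s (a + b)) 0" using assms Suc.prems by simp
  ultimately show ?case unfolding add_Suc_right DD_pow_Suc DD_iff by blast
qed

lemma DD_inQ: assumes "\<forall>l<L. s (Suc l) \<in> \<delta> (s l) 0" "s 0 \<in> Q" "\<forall>q\<in>Q. \<delta> q 0 \<subseteq> Q"
  shows "l \<le> L \<Longrightarrow> s l \<in> Q"
proof (induction l)
  case 0 then show ?case using assms by simp
next
  case (Suc l)
  hence "s l \<in> Q" "l < L" by auto
  thus ?case using assms by blast
qed

lemma pump:
  assumes nfa: "is_NFA Q {0} \<delta> I F" and acc: "(DD \<delta> ^^ m) I \<inter> F \<noteq> {}" and m: "card Q \<le> m"
  shows "\<exists>c. 1 \<le> c \<and> c \<le> card Q \<and> (\<forall>T. (DD \<delta> ^^ (m + T*c)) I \<inter> F \<noteq> {})"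
proof -
  obtain y where y: "y \<in> (DD \<delta> ^^ m) I" "y \<in> F" using acc by blast
  obtain s where s: "s 0 \<in> I" "\<forall>l<m. s (Suc l) \<in> \<delta> (s l) 0" "s m = y" using DD_path[OF y(1)] by blast
  have fQ: "finite Q" "I \<subseteq> Q" "\<forall>q\<in>Q. \<delta> q 0 \<subseteq> Q" using nfa by (auto simp: is_NFA_def)
  have sQ: "s ` {0..card Q} \<subseteq> Q" using DD_inQ[of m s \<delta> Q] s fQ m by auto
  have "\<not> inj_on s {0..card Q}"
  proof
    assume "inj_on s {0..card Q}"
    from card_inj_on_le[OF this sQ fQ(1)] show False by simp
  qed
  then obtain i j where ij: "i < j" "j \<le> card Q" "s i = s j"
    unfolding inj_on_def by (metis atLeastAtMost_iff linorder_neqE_nat)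
  define c where "c = j - i"
  define x where "x = s i"
  have xi: "x \<in> (DD \<delta> ^^ i) I"
  proof -
    have "s (0 + i) \<in> (DD \<delta> ^^ i) {s 0}" using DD_seg[of m s \<delta>, OF s(2), of 0 i] ij m by simp
    also have "\<dots> \<subseteq> (DD \<delta> ^^ i) I" using s(1) by (intro DD_mono) simp
    finally show ?thesis by (simp add: x_def)
  qed
  have loop: "x \<in> (DD \<delta> ^^ c) {x}" using DD_seg[of m s \<delta>, OF s(2), of i c] ij m by (simp add: c_def x_def)
  have loops: "x \<in> (DD \<delta> ^^ (T*c)) {x}" for T
  proof (induction T)
    case 0 then show ?case by simp
  next
    case (Suc T)
    from DD_trans[OF Suc loop] show ?case by (simp add: add.commute)
  qed
  have tail: "y \<in> (DD \<delta> ^^ (m - j)) {x}" using DD_seg[of m s \<delta>, OF s(2), of j "m - j"] ij m s(3)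
    by (simp add: x_def)
  have "y \<in> (DD \<delta> ^^ ((m - j) + (Suc T * c + i))) I" for T
    using DD_trans[OF DD_trans[OF xi loops] tail] .
  moreover have "(m - j) + (Suc T * c + i) = m + T*c" for T using ij m by (simp add: c_def)
  ultimately have "\<forall>T. (DD \<delta> ^^ (m + T*c)) I \<inter> F \<noteq> {}" using y(2) by (metis disjoint_iff)
  moreover have "1 \<le> c" "c \<le> card Q" using ij by (auto simp: c_def)
  ultimately show ?thesis by blast
qed

lemma poly_bound:
  fixes p :: "real poly" and x :: real
  assumes "0 \<le> x"
  shows "poly p x \<le> (\<Sum>i\<le>degree p. \<bar>coeff p i\<bar>) * (x+1)^degree p"
proof -
  have "poly p x = (\<Sum>i\<le>degree p. coeff p i * x ^ i)" by (rule poly_altdef)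
  also have "\<dots> \<le> (\<Sum>i\<le>degree p. \<bar>coeff p i\<bar> * (x+1)^degree p)"
  proof (rule sum_mono)
    fix i assume i: "i \<in> {..degree p}"
    have "coeff p i * x^i \<le> \<bar>coeff p i\<bar> * x^i" using assms
      by (intro mult_right_mono) auto
    also have "x^i \<le> (x+1)^i" using assms by (intro power_mono) auto
    also have "(x+1)^i \<le> (x+1)^degree p" using assms i by (intro power_increasing) auto
    finally show "coeff p i * x^i \<le> \<bar>coeff p i\<bar> * (x+1)^degree p"
      using assms by (simp add: mult_left_mono)
  qed
  also have "\<dots> = (\<Sum>i\<le>degree p. \<bar>coeff p i\<bar>) * (x+1)^degree p" by (simp add: sum_distrib_right)
  finally show ?thesis .
qed

lemma bern: "2^t * (t+2) \<le> 2 * (3::nat)^t"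
proof (induction t)
  case 0 then show ?case by simp
next
  case (Suc t)
  have "2^Suc t * (Suc t + 2) \<le> 3 * (2^t * (t+2))" by simp
  also have "\<dots> \<le> 3 * (2 * 3^t)" using Suc by simp
  finally show ?case by simp
qed

lemma expo: "e * (3 * 2^(8*e+4) + 1) + 1 \<le> (3::nat)^(8*e+4)"
proof -
  define t where "t = 8*e+4"
  have "2^t * (t+2) \<le> 2 * (3::nat)^t" by (rule bern)
  hence "2 * (2^t * (4*e+3)) \<le> 2 * (3::nat)^t" unfolding t_def by (simp add: algebra_simps)
  hence a: "2^t * (4*e+3) \<le> (3::nat)^t" by simp
  define P :: nat where "P = 2^t"
  have "1 \<le> P" unfolding P_def by simp
  hence "e * 1 \<le> e * P" by (rule mult_le_mono2)
  hence eP: "e \<le> P * e" by (simp add: mult.commute)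
  have "e * (3 * P + 1) + 1 \<le> P * (4*e+3)" using \<open>1 \<le> P\<close> by (simp add: algebra_simps) (use eP in linarith)
  hence "e * (3 * 2^t + 1) + 1 \<le> 2^t * (4*e+3)" unfolding P_def .
  with a show ?thesis unfolding t_def by linarith
qed

lemma prod_dvd_coprime:
  fixes d :: "nat \<Rightarrow> nat"
  assumes "finite A" "\<And>i j. i \<in> A \<Longrightarrow> j \<in> A \<Longrightarrow> i \<noteq> j \<Longrightarrow> coprime (d i) (d j)"
    "\<And>i. i \<in> A \<Longrightarrow> d i dvd c"
  shows "prod d A dvd c"
  using assms
proof (induction A rule: finite_induct)
  case empty then show ?case by simp
next
  case (insert x A)
  have "coprime (d x) (prod d A)"
    by (rule prod_coprime_right) (use insert in auto)
  moreover have "prod d A dvd c" using insert by auto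
  moreover have "d x dvd c" using insert by auto
  ultimately show ?case using insert by (simp add: divides_mult)
qed

lemma coprime_lin0:
  fixes K x y g :: nat
  assumes "x < y" "1 \<le> x" "y \<le> k" "\<And>m. 1 \<le> m \<Longrightarrow> m < k \<Longrightarrow> m dvd K"
    "g dvd x*K+1" "g dvd y*K+1"
  shows "g = 1"
proof -
  have "g dvd y*(x*K+1)" using assms(5) by (rule dvd_mult)
  moreover have "g dvd x*(y*K+1)" using assms(6) by (rule dvd_mult)
  ultimately have "g dvd y*(x*K+1) - x*(y*K+1)" by (rule dvd_diff_nat)
  moreover have "y*(x*K+1) - x*(y*K+1) = y - x" by (simp add: algebra_simps)
  ultimately have "g dvd y - x" by simp
  moreover have "y - x dvd K" using assms(1-3) by (intro assms(4)) auto
  ultimately have "g dvd K" by (rule dvd_trans)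
  hence "g dvd x*K" by simp
  with assms(5) have "g dvd 1" using dvd_add_right_iff[of g "x*K" 1] by blast
  thus ?thesis by simp
qed

lemma coprime_lin:
  fixes K a b :: nat
  assumes "a \<noteq> b" "1 \<le> a" "1 \<le> b" "a \<le> k" "b \<le> k" "\<And>m. 1 \<le> m \<Longrightarrow> m < k \<Longrightarrow> m dvd K"
  shows "coprime (a*K+1) (b*K+1)"
proof (rule coprimeI)
  fix g assume ga: "g dvd a*K+1" and gb: "g dvd b*K+1"
  from assms(1) have "a < b \<or> b < a" by linarith
  hence "g = 1"
  proof
    assume "a < b" thus "g = 1" using coprime_lin0[of a b k K g] assms ga gb by blast
  next
    assume "b < a" thus "g = 1" using coprime_lin0[of b a k K g] assms ga gb by blast
  qed
  thus "is_unit g" by simp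
qed

theorem proposition5:
  shows "\<not> (\<exists>p :: real poly. \<forall>n Sig M alpha eta. is_IFA n Sig M alpha eta \<longrightarrow>
            (\<exists>(Q :: nat set) delta I F. is_NFA Q Sig delta I F
               \<and> real (card Q) \<le> poly p (real n)
               \<and> nfa_lang Sig delta I F = ifa_lang n Sig M alpha eta))"
proof
  assume "\<exists>p :: real poly. \<forall>n Sig M alpha eta. is_IFA n Sig M alpha eta \<longrightarrow>
            (\<exists>(Q :: nat set) delta I F. is_NFA Q Sig delta I F
               \<and> real (card Q) \<le> poly p (real n)
               \<and> nfa_lang Sig delta I F = ifa_lang n Sig M alpha eta)"
  then obtain p :: "real poly" where hp: "\<And>n Sig M alpha eta. is_IFA n Sig M alpha eta \<Longrightarrow>
            (\<exists>(Q :: nat set) delta I F. is_NFA Q Sig delta I F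
               \<and> real (card Q) \<le> poly p (real n)
               \<and> nfa_lang Sig delta I F = ifa_lang n Sig M alpha eta)" by blast
  define e where "e = degree p"
  define C where "C = (\<Sum>i\<le>degree p. \<bar>coeff p i\<bar>)"
  have C0: "0 \<le> C" unfolding C_def by (intro sum_nonneg) simp
  define t where "t = 8*e+4"
  define k where "k = (3::nat)^t"
  define c0 where "c0 = nat \<lceil>C\<rceil> + 7"
  define K where "K = (fact (k + c0) :: nat)"
  define d where "d i = (min i (k-1) + 1) * K + 1" for i
  define N where "N = (\<Prod>i<k. d i)"
  define D where "D = k*K+1"
  have k1: "1 \<le> k" unfolding k_def by simp
  have Kge: "k + c0 \<le> K" unfolding K_def by (rule fact_ge_self)
  have K7: "7 \<le> K" "k + 1 \<le> K" using Kge unfolding c0_def by auto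
  have KdvdM: "\<And>m. 1 \<le> m \<Longrightarrow> m < k \<Longrightarrow> m dvd K" unfolding K_def
    by (rule dvd_fact) auto
  have dpos: "0 < d i" for i unfolding d_def by simp
  have dle: "d i \<le> D" for i
  proof -
    have "min i (k-1) + 1 \<le> k" using k1 by linarith
    hence "(min i (k-1) + 1) * K \<le> k * K" by (rule mult_le_mono1)
    thus ?thesis unfolding d_def D_def by simp
  qed
  have dK: "K \<le> d i" for i unfolding d_def by simp
  have cop: "coprime (d i) (d j)" if "i < k" "j < k" "i \<noteq> j" for i j
  proof -
    have "min i (k-1) = i" "min j (k-1) = j" using that by auto
    hence "d i = (i+1)*K+1" "d j = (j+1)*K+1" unfolding d_def by auto
    moreover have "coprime ((i+1)*K+1) ((j+1)*K+1)"
      by (rule coprime_lin[of _ _ k]) (use that KdvdM in auto)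
    ultimately show ?thesis by simp
  qed
  define v where "v m i = (if d i dvd m then 1 else (0::rat))" for m i
  define f where "f = (\<lambda>m. G t 0 (v m))"
  have repv: "rep (\<lambda>m. v m i) D" for i
    unfolding v_def by (rule rep_mono[OF rep_dvd[OF dpos] dle])
  have D1: "1 \<le> D" unfolding D_def by simp
  have repf: "rep f (B t D)" unfolding f_def by (rule rep_G[OF repv D1])
  obtain n' M al et where n': "n' \<le> B t D" "wa_wf n' {0} M al et"
    "\<And>L. wa_weight n' M al et (replicate L 0) = f L"
    using rep_WA[OF repf] by blast
  have f01: "f L \<in> {0,1}" for L unfolding f_def by (rule G01) (simp add: v_def)
  have wrep: "w \<in> lists {0} \<Longrightarrow> w = replicate (length w) 0" for w :: "nat list"
    by (metis in_listsD replicate_length_same singletonD)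
  have ifa: "is_IFA n' {0} M al et" unfolding is_IFA_def
  proof (intro conjI ballI)
    show "wa_wf n' {0} M al et" by (rule n'(2))
    fix w :: "nat list" assume "w \<in> lists {0}"
    hence "w = replicate (length w) 0" by (rule wrep)
    hence "wa_weight n' M al et w = f (length w)" using n'(3) by metis
    thus "wa_weight n' M al et w \<in> {0,1}" using f01 by simp
  qed
  obtain Q :: "nat set" and \<delta> I F where nfa: "is_NFA Q {0} \<delta> I F"
    and cQ: "real (card Q) \<le> poly p (real n')" and lang: "nfa_lang {0} \<delta> I F = ifa_lang n' {0} M al et"
    using hp[OF ifa] by blast
  have memb: "(DD \<delta> ^^ L) I \<inter> F \<noteq> {} \<longleftrightarrow> f L = 1" for L
  proof -
    have r: "replicate L (0::nat) \<in> lists {0}" by auto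
    have q: "replicate L 0 \<in> nfa_lang {0} \<delta> I F \<longleftrightarrow> replicate L (0::nat) \<in> lists {0} \<and> nfa_reach \<delta> I (replicate L 0) \<inter> F \<noteq> {}"
      unfolding nfa_lang_def by (simp only: mem_Collect_eq)
    have "(DD \<delta> ^^ L) I \<inter> F \<noteq> {} \<longleftrightarrow> replicate L 0 \<in> nfa_lang {0} \<delta> I F"
      unfolding q reach_rep using r by (simp only: simp_thms)
    also have "\<dots> \<longleftrightarrow> replicate L 0 \<in> ifa_lang n' {0} M al et" using lang by simp
    also have "\<dots> \<longleftrightarrow> f L = 1" using r n'(3) by (simp add: ifa_lang_def)
    finally show ?thesis .
  qed
  have Ble: "B t D \<le> (7*D)^(2^t)" using B_bound[of t D] by linarith
  have "7*D \<le> 7*(k+1)*K" unfolding D_def using K7 by (simp add: algebra_simps)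
  also have "\<dots> \<le> (K*K)*K" using K7 by (intro mult_le_mono1 mult_le_mono) auto
  also have "\<dots> = K^3" by (simp add: power3_eq_cube)
  finally have "7*D \<le> K^3" .
  hence "(7*D)^(2^t) \<le> (K^3)^(2^t)" by (rule power_mono) simp
  also have "\<dots> = K^(3*2^t)" by (simp add: power_mult)
  finally have nZ: "n' \<le> K^(3*2^t)" using n'(1) Ble by linarith
  have Z1: "1 \<le> K^(3*2^t)" using K7 by simp
  have "n' + 1 \<le> K^(3*2^t) + K^(3*2^t)" using nZ Z1 by linarith
  also have "\<dots> \<le> K * K^(3*2^t)" using K7 by (simp add: mult_2[symmetric])
  also have "\<dots> = K^(3*2^t+1)" by simp
  finally have n1: "n' + 1 \<le> K^(3*2^t+1)" .
  define E' where "E' = e * (3*2^t+1)"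
  have "real (card Q) \<le> C * (real n' + 1)^e" using cQ poly_bound[of "real n'" p] unfolding C_def e_def by simp
  also have "\<dots> \<le> C * (real (K^(3*2^t+1)))^e"
  proof -
    have "real n' + 1 \<le> real (K^(3*2^t+1))" using n1 by linarith
    hence "(real n' + 1)^e \<le> (real (K^(3*2^t+1)))^e" by (rule power_mono) simp
    thus ?thesis using C0 by (rule mult_left_mono)
  qed
  also have "\<dots> = C * real (K^E')"
  proof -
    have "(K^(3*2^t+1))^e = K^E'" unfolding E'_def by (metis power_mult mult.commute)
    hence "(real (K^(3*2^t+1)))^e = real (K^E')" by (metis of_nat_power)
    thus ?thesis by simp
  qed
  also have "\<dots> < real K * real (K^E')"
  proof (rule mult_strict_right_mono)
    have "C \<le> real (nat \<lceil>C\<rceil>)" by linarith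
    hence "C < real c0" unfolding c0_def by simp
    moreover have "real c0 \<le> real K" using Kge by simp
    ultimately show "C < real K" by linarith
    show "0 < real (K^E')" using K7 by simp
  qed
  also have "\<dots> = real (K^(E'+1))" by simp
  finally have "card Q < K^(E'+1)" by linarith
  also have "K^(E'+1) \<le> K^k"
  proof (rule power_increasing)
    show "E' + 1 \<le> k" unfolding E'_def k_def t_def using expo[of e] by simp
  qed (use K7 in simp)
  also have "K^k = (\<Prod>i<k. K)" by simp
  also have "\<dots> \<le> N" unfolding N_def by (rule prod_mono) (use dK in simp)
  finally have QN: "card Q < N" .
  have dN: "d i dvd N" for i
  proof -
    have "d i = d (min i (k-1))" unfolding d_def by simp
    moreover have "min i (k-1) \<in> {..<k}" using k1 by auto
    ultimately show ?thesis unfolding N_def by (metis dvd_prodI finite_lessThan)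
  qed
  define m0 where "m0 = N * card Q"
  have "f m0 = 1" unfolding f_def
    by (rule G_one) (simp add: v_def m0_def dN)
  hence acc: "(DD \<delta> ^^ m0) I \<inter> F \<noteq> {}" using memb by simp
  have Npos: "0 < N" unfolding N_def using dpos by (simp add: prod_pos)
  have "card Q \<le> m0" unfolding m0_def using Npos by simp
  obtain c where c: "1 \<le> c" "c \<le> card Q" "\<And>T. (DD \<delta> ^^ (m0 + T*c)) I \<inter> F \<noteq> {}"
    using pump[OF nfa acc \<open>card Q \<le> m0\<close>] by blast
  have "\<exists>i0<k. \<not> d i0 dvd c"
  proof (rule ccontr)
    assume "\<not> (\<exists>i0<k. \<not> d i0 dvd c)"
    hence "N dvd c" unfolding N_def by (intro prod_dvd_coprime) (auto intro: cop)
    hence "N \<le> c" using c(1) by (simp add: dvd_imp_le)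
    thus False using c(2) QN by linarith
  qed
  then obtain i0 where i0: "i0 < k" "\<not> d i0 dvd c" by blast
  define T where "T = (\<Prod>j\<in>{..<k}-{i0}. d j)"
  have copT: "coprime (d i0) T" unfolding T_def by (rule prod_coprime_right) (use cop i0 in auto)
  have "f (m0 + T*c) = 0" unfolding f_def
  proof (rule G_zero[of 0 t i0])
    show "0*3^t \<le> i0" by simp
    show "i0 < (0+1)*3^t" using i0 k_def by simp
    have "d i0 dvd m0" unfolding m0_def using dN by simp
    moreover have "\<not> d i0 dvd T*c" using copT i0(2) by (simp add: coprime_dvd_mult_right_iff)
    ultimately have "\<not> d i0 dvd m0 + T*c" by (simp add: dvd_add_right_iff)
    thus "v (m0 + T*c) i0 = 0" by (simp add: v_def)
    fix i assume i: "0*3^t \<le> i" "i < (0+1)*3^t" "i \<noteq> i0"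
    have "i \<in> {..<k}-{i0}" using i k_def by auto
    hence "d i dvd T" unfolding T_def by (metis dvd_prodI finite_Diff finite_lessThan)
    moreover have "d i dvd m0" unfolding m0_def using dN by simp
    ultimately have "d i dvd m0 + T*c" by simp
    thus "v (m0 + T*c) i = 1" by (simp add: v_def)
  qed
  moreover have "f (m0 + T*c) = 1" using memb c(3) by blast
  ultimately show False by simp
qed

end
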